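(* Let $t \in \mathbb{N}$ and let $G \in \mathcal{X}_t$ be a graph with no cut vertex. Let $A,B\subseteq V(G)$ be disjoint independent sets that are complete to each other, with $|A|,|B|\ge 3t^2+t+1$, such that $G[A\cup B]$ is a maximal induced complete bipartite subgraph of $G$ (i.e. there are no independent sets $A'\supseteq A$, $B'\supseteq B$, disjoint and complete to each other, with $A'\cup B'\supsetneq A\cup B$). Then $A\cup B$ is a module of $G$.
   Context: All graphs are finite and simple. For graphs $G_1=(V_1,E_1)$, $G_2=(V_2,E_2)$, $G_1\cap G_2=(V_1\cap V_2, E_1\cap E_2)$. For a graph $G=(V,E)$ and an injective map $\alpha$ on $V$, $G^{\alpha}$ has vertex set $\alpha(V)$ and edge set $\{\{\alpha(v),\alpha(w)\}: \{v,w\}\in E\}$. We write $G\xrightarrow{\cap} H$ if $H$ is (isomorphic to) $G^{\alpha_1}\cap\cdots\cap G^{\alpha_k}$ for some $k\ge1$ and injective maps $\alpha_1,\dots,\alpha_k$ on $V(G)$. For a set $M$ of graphs, $\mathrm{SiFree}(M)$ is the class of graphs $G$ such that $G\xrightarrow{\cap}F$ holds for no $F\in M$. For integers $a,b,c\ge1$, $S_{a,b,c}$ is the tree consisting of a vertex of degree $3$ together with three pendant paths having $a$, $b$, $c$ edges respectively; $tS_{t,t,t}$ is the disjoint union of $t$ copies of $S_{t,t,t}$, and $\mathcal{X}_t=\mathrm{SiFree}(\{tS_{t,t,t}\})$. A cut vertex is a vertex whose removal increases the number of connected components. Sets $X,Y$ are complete (anticomplete) to each other if every (no) vertex of $X$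 is adjacent to every (any) vertex of $Y$. A set $U\subseteq V(G)$ is a module if every vertex of $V(G)\setminus U$ is complete or anticomplete to $U$. *)

theory Defs
  imports Main
begin

type_synonym 'v graph = "'v set \<times> 'v set set"

abbreviation verts :: "'v graph \<Rightarrow> 'v set" where "verts G \<equiv> fst G"
abbreviation edges :: "'v graph \<Rightarrow> 'v set set" where "edges G \<equiv> snd G"

definition is_graph :: "'v graph \<Rightarrow> bool" where
  "is_graph G \<longleftrightarrow> finite (verts G) \<and>
     (\<forall>e\<in>edges G. \<exists>u v. e = {u, v} \<and> u \<noteq> v \<and> u \<in> verts G \<and> v \<in> verts G)"

definition adj :: "'v graph \<Rightarrow> 'v \<Rightarrow> 'v \<Rightarrow> bool" where
  "adj G u v \<longleftrightarrow> {u, v} \<in> edges G"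

definition gimage :: "('v \<Rightarrow> 'w) \<Rightarrow> 'v graph \<Rightarrow> 'w graph" where
  "gimage \<alpha> G = (\<alpha> ` verts G, (\<lambda>e. \<alpha> ` e) ` edges G)"

definition ginter :: "'w graph set \<Rightarrow> 'w graph" where
  "ginter Gs = (\<Inter>H\<in>Gs. verts H, \<Inter>H\<in>Gs. edges H)"

definition graph_iso :: "'v graph \<Rightarrow> 'w graph \<Rightarrow> bool" where
  "graph_iso G H \<longleftrightarrow> (\<exists>f. bij_betw f (verts G) (verts H) \<and>
     edges H = (\<lambda>e. f ` e) ` edges G)"

text \<open>G -->cap H: H is isomorphic to an intersection of k >= 1 injective images
  of G. Images are taken in the infinite type nat, which is no loss of generality
  since V(G) is finite.\<close>
definition inter_to :: "'v graph \<Rightarrow> 'w graph \<Rightarrow> bool" where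
  "inter_to G H \<longleftrightarrow> (\<exists>\<alpha>s :: ('v \<Rightarrow> nat) list. \<alpha>s \<noteq> [] \<and>
     (\<forall>\<alpha>\<in>set \<alpha>s. inj_on \<alpha> (verts G)) \<and>
     graph_iso (ginter ((\<lambda>\<alpha>. gimage \<alpha> G) ` set \<alpha>s)) H)"

definition sifree1 :: "'w graph \<Rightarrow> 'v graph \<Rightarrow> bool" where
  "sifree1 F G \<longleftrightarrow> \<not> inter_to G F"

text \<open>t S_{t,t,t}: copy i < t; the centre of copy i is (i,0,0); the vertex at
  distance l (1 <= l <= t) on branch j < 3 of copy i is (i,j,l).\<close>
definition tStt :: "nat \<Rightarrow> (nat \<times> nat \<times> nat) graph" where
  "tStt t = ({(i, 0, 0) | i. i < t} \<union> {(i, j, l) | i j l. i < t \<and> j < 3 \<and> 1 \<le> l \<and> l \<le> t},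
     {{(i, 0, 0), (i, j, 1)} | i j. i < t \<and> j < 3} \<union>
     {{(i, j, l), (i, j, Suc l)} | i j l. i < t \<and> j < 3 \<and> 1 \<le> l \<and> l < t})"

definition X_class :: "nat \<Rightarrow> 'v graph \<Rightarrow> bool" where
  "X_class t G \<longleftrightarrow> is_graph G \<and> sifree1 (tStt t) G"

definition reach :: "'v graph \<Rightarrow> 'v \<Rightarrow> 'v \<Rightarrow> bool" where
  "reach G = (\<lambda>u v. u \<in> verts G \<and> v \<in> verts G \<and> adj G u v)\<^sup>*\<^sup>*"

definition num_components :: "'v graph \<Rightarrow> nat" where
  "num_components G = card ((\<lambda>v. {u \<in> verts G. reach G v u}) ` verts G)"

definition delete_vertex :: "'v graph \<Rightarrow> 'v \<Rightarrow> 'v graph" where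
  "delete_vertex G v = (verts G - {v}, {e \<in> edges G. v \<notin> e})"

definition cut_vertex :: "'v graph \<Rightarrow> 'v \<Rightarrow> bool" where
  "cut_vertex G v \<longleftrightarrow> v \<in> verts G \<and> num_components (delete_vertex G v) > num_components G"

definition independent :: "'v graph \<Rightarrow> 'v set \<Rightarrow> bool" where
  "independent G S \<longleftrightarrow> (\<forall>u\<in>S. \<forall>v\<in>S. \<not> adj G u v)"

definition complete_to :: "'v graph \<Rightarrow> 'v set \<Rightarrow> 'v set \<Rightarrow> bool" where
  "complete_to G X Y \<longleftrightarrow> (\<forall>x\<in>X. \<forall>y\<in>Y. adj G x y)"

definition anticomplete_to :: "'v graph \<Rightarrow> 'v set \<Rightarrow> 'v set \<Rightarrow> bool" where
  "anticomplete_to G X Y \<longleftrightarrow> (\<forall>x\<in>X. \<forall>y\<in>Y. \<not> adj G x y)"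

definition is_module :: "'v graph \<Rightarrow> 'v set \<Rightarrow> bool" where
  "is_module G U \<longleftrightarrow> U \<subseteq> verts G \<and>
     (\<forall>v \<in> verts G - U. complete_to G {v} U \<or> anticomplete_to G {v} U)"

definition bip_pair :: "'v graph \<Rightarrow> 'v set \<Rightarrow> 'v set \<Rightarrow> bool" where
  "bip_pair G A B \<longleftrightarrow> A \<subseteq> verts G \<and> B \<subseteq> verts G \<and> A \<inter> B = {} \<and>
     independent G A \<and> independent G B \<and> complete_to G A B"

definition maximal_bip_pair :: "'v graph \<Rightarrow> 'v set \<Rightarrow> 'v set \<Rightarrow> bool" where
  "maximal_bip_pair G A B \<longleftrightarrow> bip_pair G A B \<and>
     \<not> (\<exists>A' B'. A \<subseteq> A' \<and> B \<subseteq> B' \<and> bip_pair G A' B' \<and> A \<union> B \<subset> A' \<union> B')"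

end

theory Submission
  imports Defs
begin


definition hom_ok :: "'w graph \<Rightarrow> 'v graph \<Rightarrow> ('w \<Rightarrow> 'v) \<Rightarrow> bool" where
  "hom_ok T G \<phi> \<longleftrightarrow> inj_on \<phi> (verts T) \<and> \<phi> ` verts T \<subseteq> verts G \<and>
     (\<forall>a b. {a,b} \<in> edges T \<longrightarrow> adj G (\<phi> a) (\<phi> b))"

definition alph :: "('w \<Rightarrow> nat) \<Rightarrow> ('v \<Rightarrow> nat) \<Rightarrow> 'w set \<Rightarrow> nat \<Rightarrow> ('w \<Rightarrow> 'v) \<Rightarrow> 'v \<Rightarrow> nat" where
  "alph code enc VT i \<phi> u = (if u \<in> \<phi> ` VT then 2 * code (inv_into VT \<phi> u) else 4 * enc u + 2 * i + 1)"

lemma alph_inj: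
  assumes "inj_on code VT" "inj_on enc VG" "inj_on \<phi> VT"
  shows "inj_on (alph code enc VT i \<phi>) VG"
proof (rule inj_onI)
  fix u u' assume u: "u \<in> VG" "u' \<in> VG" and eq: "alph code enc VT i \<phi> u = alph code enc VT i \<phi> u'"
  show "u = u'"
  proof (cases "u \<in> \<phi> ` VT")
    case True
    then show ?thesis
    proof (cases "u' \<in> \<phi> ` VT")
      case True2: True
      then have "code (inv_into VT \<phi> u) = code (inv_into VT \<phi> u')"
        using eq True by (simp add: alph_def)
      then have "inv_into VT \<phi> u = inv_into VT \<phi> u'"
        using assms(1) True True2 by (meson inj_onD inv_into_into)
      then show ?thesis using True True2 by (metis f_inv_into_f)
    next
      case False
      then show ?thesis using eq True by (simp add: alph_def) presburger
    qed
  next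
    case False
    then show ?thesis
    proof (cases "u' \<in> \<phi> ` VT")
      case True
      then show ?thesis using eq False by (simp add: alph_def) presburger
    next
      case False2: False
      then have "enc u = enc u'" using eq False by (simp add: alph_def)
      then show ?thesis using assms(2) u by (meson inj_onD)
    qed
  qed
qed

lemma alph_img:
  assumes "inj_on \<phi> VT" "x \<in> VT"
  shows "alph code enc VT i \<phi> (\<phi> x) = 2 * code x"
  using assms by (simp add: alph_def)

lemma alph_even:
  assumes "alph code enc VT i \<phi> u = 2 * code x" "inj_on code VT" "x \<in> VT" "inj_on \<phi> VT"
  shows "u = \<phi> x"
proof (cases "u \<in> \<phi> ` VT")
  case True
  then have "code (inv_into VT \<phi> u) = code x" using assms(1) by (simp add: alph_def)
  then have "inv_into VT \<phi> u = x" using assms True by (meson inj_onD inv_into_into)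
  then show ?thesis using True by (metis f_inv_into_f)
next
  case False
  then show ?thesis using assms(1) by (simp add: alph_def) presburger
qed

lemma graph_edgeE:
  assumes "is_graph G" "e \<in> edges G"
  obtains u v where "e = {u,v}" "u \<noteq> v" "u \<in> verts G" "v \<in> verts G"
  using assms unfolding is_graph_def by meson

lemma graph_edge_sub:
  assumes "is_graph G" "e \<in> edges G"
  shows "e \<subseteq> verts G"
  using graph_edgeE[OF assms] by (metis empty_subsetI insert_subset)

lemma inter_to_I:
  fixes G :: "'v graph" and T :: "'w graph"
  assumes G: "is_graph G" and T: "is_graph T"
    and ex: "\<exists>\<phi>. hom_ok T G \<phi>"
    and kill: "\<forall>x\<in>verts T. \<forall>y\<in>verts T. x \<noteq> y \<longrightarrow> {x,y} \<notin> edges T \<longrightarrow>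
       (\<exists>\<phi>. hom_ok T G \<phi> \<and> \<not> adj G (\<phi> x) (\<phi> y))"
  shows "inter_to G T"
proof -
  define VT where "VT = verts T"
  define VG where "VG = verts G"
  have fT: "finite VT" using T by (simp add: is_graph_def VT_def)
  have fG: "finite VG" using G by (simp add: is_graph_def VG_def)
  obtain \<phi>0 where h0: "hom_ok T G \<phi>0" using ex by blast
  define P where "P = {(x,y). x \<in> VT \<and> y \<in> VT \<and> x \<noteq> y \<and> {x,y} \<notin> edges T}"
  have "P \<subseteq> VT \<times> VT" unfolding P_def by auto
  then have "finite P" using fT by (meson finite_SigmaI finite_subset)
  then obtain xs where xs: "set xs = P" using finite_list by blast
  define \<psi> where "\<psi> = (\<lambda>(x,y). SOME \<phi>. hom_ok T G \<phi> \<and> \<not> adj G (\<phi> x) (\<phi> y))"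
  have \<psi>: "hom_ok T G (\<psi> (x,y)) \<and> \<not> adj G (\<psi> (x,y) x) (\<psi> (x,y) y)" if "(x,y) \<in> P" for x y
  proof -
    have "\<exists>\<phi>. hom_ok T G \<phi> \<and> \<not> adj G (\<phi> x) (\<phi> y)" using kill that unfolding P_def VT_def by blast
    then have "hom_ok T G (SOME \<phi>. hom_ok T G \<phi> \<and> \<not> adj G (\<phi> x) (\<phi> y)) \<and>
       \<not> adj G ((SOME \<phi>. hom_ok T G \<phi> \<and> \<not> adj G (\<phi> x) (\<phi> y)) x) ((SOME \<phi>. hom_ok T G \<phi> \<and> \<not> adj G (\<phi> x) (\<phi> y)) y)"
      by (rule someI_ex)
    then show ?thesis unfolding \<psi>_def by simp
  qed
  obtain code :: "'w \<Rightarrow> nat" where code: "inj_on code VT" using finite_imp_inj_to_nat_seg[OF fT] by blast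
  obtain enc :: "'v \<Rightarrow> nat" where enc: "inj_on enc VG" using finite_imp_inj_to_nat_seg[OF fG] by blast
  define \<alpha> where "\<alpha> = alph code enc VT"
  define \<alpha>s where "\<alpha>s = \<alpha> 0 \<phi>0 # \<alpha> 1 \<phi>0 # map (\<lambda>p. \<alpha> 0 (\<psi> p)) xs"
  have \<alpha>s: "\<exists>i \<phi>. \<beta> = \<alpha> i \<phi> \<and> hom_ok T G \<phi>" if "\<beta> \<in> set \<alpha>s" for \<beta>
  proof -
    have "\<beta> = \<alpha> 0 \<phi>0 \<or> \<beta> = \<alpha> 1 \<phi>0 \<or> (\<exists>p\<in>P. \<beta> = \<alpha> 0 (\<psi> p))"
      using that xs unfolding \<alpha>s_def by auto
    then show ?thesis using h0 \<psi> by fast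
  qed
  have injb: "inj_on \<beta> VG" if "\<beta> \<in> set \<alpha>s" for \<beta>
    using \<alpha>s[OF that] alph_inj[OF code enc] unfolding hom_ok_def \<alpha>_def VT_def by blast
  define W where "W = (\<lambda>x. 2 * code x) ` VT"
  have Vint: "(\<Inter>\<beta>\<in>set \<alpha>s. \<beta> ` VG) = W"
  proof
    show "W \<subseteq> (\<Inter>\<beta>\<in>set \<alpha>s. \<beta> ` VG)"
    proof
      fix z assume "z \<in> W"
      then obtain x where x: "x \<in> VT" "z = 2 * code x" unfolding W_def by blast
      show "z \<in> (\<Inter>\<beta>\<in>set \<alpha>s. \<beta> ` VG)"
      proof
        fix \<beta> assume "\<beta> \<in> set \<alpha>s"
        then obtain i \<phi> where b: "\<beta> = \<alpha> i \<phi>" "hom_ok T G \<phi>" using \<alpha>s by blast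
        then have "\<phi> x \<in> VG" "\<beta> (\<phi> x) = z" using x alph_img[of \<phi> VT x code enc i]
          unfolding hom_ok_def VT_def VG_def \<alpha>_def by auto
        then show "z \<in> \<beta> ` VG" by force
      qed
    qed
  next
    show "(\<Inter>\<beta>\<in>set \<alpha>s. \<beta> ` VG) \<subseteq> W"
    proof
      fix z assume z: "z \<in> (\<Inter>\<beta>\<in>set \<alpha>s. \<beta> ` VG)"
      have "\<alpha> 0 \<phi>0 \<in> set \<alpha>s" "\<alpha> 1 \<phi>0 \<in> set \<alpha>s" unfolding \<alpha>s_def by auto
      then obtain u u' where u: "z = \<alpha> 0 \<phi>0 u" "z = \<alpha> 1 \<phi>0 u'" using z by blast
      show "z \<in> W"
      proof (cases "u \<in> \<phi>0 ` VT")
        case True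
        then show ?thesis using u unfolding \<alpha>_def alph_def W_def by (auto intro: inv_into_into)
      next
        case False
        then show ?thesis using u unfolding \<alpha>_def alph_def W_def
          by (cases "u' \<in> \<phi>0 ` VT") (simp_all, presburger+)
      qed
    qed
  qed
  define F where "F = (\<lambda>e. (\<lambda>x. 2 * code x) ` e) ` edges T"
  have Eint: "(\<Inter>\<beta>\<in>set \<alpha>s. (\<lambda>e. \<beta> ` e) ` edges G) = F"
  proof
    show "F \<subseteq> (\<Inter>\<beta>\<in>set \<alpha>s. (\<lambda>e. \<beta> ` e) ` edges G)"
    proof
      fix E assume "E \<in> F"
      then obtain e where e: "e \<in> edges T" "E = (\<lambda>x. 2 * code x) ` e" unfolding F_def by blast
      then obtain x y where xy: "e = {x,y}" "x \<in> VT" "y \<in> VT" using graph_edgeE[OF T] unfolding VT_def by metis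
      show "E \<in> (\<Inter>\<beta>\<in>set \<alpha>s. (\<lambda>e. \<beta> ` e) ` edges G)"
      proof
        fix \<beta> assume "\<beta> \<in> set \<alpha>s"
        then obtain i \<phi> where b: "\<beta> = \<alpha> i \<phi>" "hom_ok T G \<phi>" using \<alpha>s by blast
        then have "{\<phi> x, \<phi> y} \<in> edges G" using e xy unfolding hom_ok_def adj_def by blast
        moreover have "\<beta> ` {\<phi> x, \<phi> y} = E" using b xy e alph_img[of \<phi> VT _ code enc i]
          unfolding hom_ok_def VT_def \<alpha>_def by auto
        ultimately show "E \<in> (\<lambda>e. \<beta> ` e) ` edges G" by (rule rev_image_eqI[OF _ sym])
      qed
    qed
  next
    show "(\<Inter>\<beta>\<in>set \<alpha>s. (\<lambda>e. \<beta> ` e) ` edges G) \<subseteq> F"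
    proof
      fix E assume E: "E \<in> (\<Inter>\<beta>\<in>set \<alpha>s. (\<lambda>e. \<beta> ` e) ` edges G)"
      have EW: "E \<subseteq> W"
      proof -
        have "E \<subseteq> \<beta> ` VG" if "\<beta> \<in> set \<alpha>s" for \<beta>
        proof -
          have "E \<in> (\<lambda>e. \<beta> ` e) ` edges G" using INT_D[OF E that] .
          then obtain e where "e \<in> edges G" "E = \<beta> ` e" by (rule imageE) simp
          moreover have "e \<subseteq> VG" using graph_edge_sub[OF G \<open>e \<in> edges G\<close>] unfolding VG_def .
          ultimately show ?thesis by blast
        qed
        then show ?thesis using Vint by blast
      qed
      have a0: "\<alpha> 0 \<phi>0 \<in> set \<alpha>s" unfolding \<alpha>s_def by auto
      have "E \<in> (\<lambda>e. \<alpha> 0 \<phi>0 ` e) ` edges G" using INT_D[OF E a0] .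
      then obtain e0 where "e0 \<in> edges G" "E = \<alpha> 0 \<phi>0 ` e0" by (rule imageE) simp
      obtain u u' where uu0: "e0 = {u, u'}" "u \<noteq> u'" "u \<in> VG" "u' \<in> VG"
        using graph_edgeE[OF G \<open>e0 \<in> edges G\<close>] unfolding VG_def by metis
      have uu: "E = {\<alpha> 0 \<phi>0 u, \<alpha> 0 \<phi>0 u'}" "u \<noteq> u'" "u \<in> VG" "u' \<in> VG"
        using uu0 \<open>E = \<alpha> 0 \<phi>0 ` e0\<close> by auto
      have ne: "\<alpha> 0 \<phi>0 u \<noteq> \<alpha> 0 \<phi>0 u'" using injb[OF a0] uu by (meson inj_onD)
      obtain x y where x: "x \<in> VT" "\<alpha> 0 \<phi>0 u = 2 * code x" and y: "y \<in> VT" "\<alpha> 0 \<phi>0 u' = 2 * code y"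
        using EW uu unfolding W_def by blast
      have xy: "x \<noteq> y" using ne x y by auto
      have Exy: "E = (\<lambda>x. 2 * code x) ` {x,y}" using uu x y by simp
      have "{x,y} \<in> edges T"
      proof (rule ccontr)
        assume nE: "{x,y} \<notin> edges T"
        then have P: "(x,y) \<in> P" unfolding P_def using x y xy by blast
        define \<phi> where "\<phi> = \<psi> (x,y)"
        have hp: "hom_ok T G \<phi>" "\<not> adj G (\<phi> x) (\<phi> y)" using \<psi>[OF P] unfolding \<phi>_def by auto
        have "\<alpha> 0 \<phi> \<in> set \<alpha>s" unfolding \<alpha>s_def \<phi>_def using xs P by auto
        then have "E \<in> (\<lambda>e. \<alpha> 0 \<phi> ` e) ` edges G" using INT_D[OF E] by blast
        then obtain e where e: "e \<in> edges G" "E = \<alpha> 0 \<phi> ` e" by (rule imageE) simp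
        then obtain v1 v2 where vv: "e = {v1,v2}" "v1 \<noteq> v2" "v1 \<in> VG" "v2 \<in> VG"
          using graph_edgeE[OF G e(1)] unfolding VG_def by metis
        have ip: "inj_on \<phi> VT" using hp unfolding hom_ok_def VT_def by simp
        have "\<alpha> 0 \<phi> v1 \<in> E" "\<alpha> 0 \<phi> v2 \<in> E" using e vv by auto
        then have e1: "\<alpha> 0 \<phi> v1 = 2 * code x \<or> \<alpha> 0 \<phi> v1 = 2 * code y"
            "\<alpha> 0 \<phi> v2 = 2 * code x \<or> \<alpha> 0 \<phi> v2 = 2 * code y"
          using Exy by auto
        have "v1 = \<phi> x \<or> v1 = \<phi> y" using e1(1) alph_even[OF _ code _ ip, of enc 0] x(1) y(1) unfolding \<alpha>_def
          by metis
        moreover have "v2 = \<phi> x \<or> v2 = \<phi> y" using e1(2) alph_even[OF _ code _ ip, of enc 0] x(1) y(1) unfolding \<alpha>_def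
          by metis
        ultimately have "e = {\<phi> x, \<phi> y}" using vv(1,2) by blast
        then show False using hp e unfolding adj_def by simp
      qed
      then show "E \<in> F" unfolding F_def using Exy by blast
    qed
  qed
  have gi: "ginter ((\<lambda>\<alpha>. gimage \<alpha> G) ` set \<alpha>s) = (W, F)"
    unfolding ginter_def gimage_def using Vint Eint VG_def by (simp add: image_image)
  have cinj: "inj_on (\<lambda>x. 2 * code x) VT" using code by (simp add: inj_on_def)
  have bij: "bij_betw (\<lambda>x. 2 * code x) VT W" using cinj unfolding W_def by (simp add: bij_betw_def)
  have iso: "graph_iso (W, F) T"
    unfolding graph_iso_def
  proof (intro exI[of _ "inv_into VT (\<lambda>x. 2 * code x)"] conjI)
    show "bij_betw (inv_into VT (\<lambda>x. 2 * code x)) (verts (W, F)) (verts T)"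
      using bij_betw_inv_into[OF bij] VT_def by simp
    have "e \<subseteq> VT" if "e \<in> edges T" for e using graph_edge_sub[OF T that] unfolding VT_def .
    then show "edges T = (`) (inv_into VT (\<lambda>x. 2 * code x)) ` edges (W, F)"
      unfolding F_def using inv_into_image_cancel[OF cinj] by (simp add: image_image)
  qed
  have ne: "\<alpha>s \<noteq> []" unfolding \<alpha>s_def by simp
  have allinj: "\<forall>\<alpha>\<in>set \<alpha>s. inj_on \<alpha> (verts G)" using injb VG_def by blast
  show ?thesis unfolding inter_to_def using ne allinj gi iso by metis
qed



lemma adj_sym: "adj G u v = adj G v u"
  unfolding adj_def by (simp add: insert_commute)

lemma tStt_verts: "(i,j,l) \<in> verts (tStt t) \<longleftrightarrow> i < t \<and> ((j = 0 \<and> l = 0) \<or> (j < 3 \<and> 1 \<le> l \<and> l \<le> t))"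
  unfolding tStt_def by auto

definition tE :: "nat \<Rightarrow> nat \<times> nat \<times> nat \<Rightarrow> nat \<times> nat \<times> nat \<Rightarrow> bool" where
  "tE t a b \<longleftrightarrow> (\<exists>i j. i < t \<and> j < 3 \<and> a = (i,0,0) \<and> b = (i,j,1)) \<or>
      (\<exists>i j l. i < t \<and> j < 3 \<and> 1 \<le> l \<and> l < t \<and> a = (i,j,l) \<and> b = (i,j,Suc l))"

lemma tStt_edge: "{a,b} \<in> edges (tStt t) \<longleftrightarrow> tE t a b \<or> tE t b a"
proof
  assume "{a,b} \<in> edges (tStt t)"
  then show "tE t a b \<or> tE t b a" unfolding tStt_def tE_def
    by (auto simp: doubleton_eq_iff)
next
  assume "tE t a b \<or> tE t b a"
  then show "{a,b} \<in> edges (tStt t)" unfolding tStt_def tE_def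
    by (auto simp: insert_commute) 
qed

lemma tE_verts: "tE t a b \<Longrightarrow> a \<noteq> b \<and> a \<in> verts (tStt t) \<and> b \<in> verts (tStt t)"
  unfolding tE_def by (auto simp: tStt_verts)

lemma tStt_graph: "is_graph (tStt t)"
  unfolding is_graph_def
proof
  have "verts (tStt t) \<subseteq> {..<t} \<times> {..<3} \<times> {..t}"
    unfolding tStt_def by auto
  then show "finite (verts (tStt t))" by (meson finite_SigmaI finite_atMost finite_lessThan finite_subset)
  show "\<forall>e\<in>edges (tStt t). \<exists>u v. e = {u, v} \<and> u \<noteq> v \<and> u \<in> verts (tStt t) \<and> v \<in> verts (tStt t)"
  proof
    fix e assume "e \<in> edges (tStt t)"
    then obtain a b where ab: "e = {a,b}" "tE t a b" unfolding tStt_def tE_def by auto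
    then have "a \<noteq> b \<and> a \<in> verts (tStt t) \<and> b \<in> verts (tStt t)"
      unfolding tE_def by (auto simp: tStt_verts)
    then show "\<exists>u v. e = {u, v} \<and> u \<noteq> v \<and> u \<in> verts (tStt t) \<and> v \<in> verts (tStt t)"
      using ab by blast
  qed
qed

lemma tStt_card: "card (verts (tStt t)) \<le> 3 * t^2 + t"
proof -
  have eq: "verts (tStt t) = (\<lambda>i. (i,0::nat,0::nat)) ` {..<t} \<union> {..<t} \<times> {..<3} \<times> {1..t}"
    unfolding tStt_def by auto
  have "card (verts (tStt t)) \<le> card ((\<lambda>i. (i,0::nat,0::nat)) ` {..<t}) + card ({..<t} \<times> {..<(3::nat)} \<times> {1..t})"
    unfolding eq by (rule card_Un_le)
  also have "\<dots> \<le> t + t * (3 * t)"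
    using card_image_le[of "{..<t}" "\<lambda>i. (i,0::nat,0::nat)"] by (simp add: card_cartesian_product)
  finally show ?thesis by (simp add: power2_eq_square)
qed

lemma bip_sym: "bip_pair G A B \<Longrightarrow> bip_pair G B A"
  unfolding bip_pair_def complete_to_def
proof (elim conjE, intro conjI ballI)
  fix x y assume "\<forall>x\<in>A. Ball B (adj G x)" "x \<in> B" "y \<in> A"
  then show "adj G x y" using adj_sym by metis
qed auto

lemma bip_adj: "bip_pair G A B \<Longrightarrow> x \<in> A \<Longrightarrow> y \<in> B \<Longrightarrow> adj G x y \<and> adj G y x"
  unfolding bip_pair_def complete_to_def by (metis adj_sym)

lemma bip_nadjA: "bip_pair G A B \<Longrightarrow> x \<in> A \<Longrightarrow> y \<in> A \<Longrightarrow> \<not> adj G x y"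
  unfolding bip_pair_def independent_def by blast

lemma bip_nadjB: "bip_pair G A B \<Longrightarrow> x \<in> B \<Longrightarrow> y \<in> B \<Longrightarrow> \<not> adj G x y"
  unfolding bip_pair_def independent_def by blast

lemma hom_okI:
  assumes "inj_on \<phi> (verts (tStt t))" "\<phi> ` verts (tStt t) \<subseteq> verts G"
    and "\<And>a b. tE t a b \<Longrightarrow> adj G (\<phi> a) (\<phi> b)"
  shows "hom_ok (tStt t) G \<phi>"
  unfolding hom_ok_def using assms tStt_edge adj_sym by metis

lemma std_hom:
  fixes c :: "nat \<Rightarrow> nat"
  assumes bp: "bip_pair G A B" and fA: "finite A" and fB: "finite B"
    and cA: "card (verts (tStt t)) \<le> card A" and cB: "card (verts (tStt t)) \<le> card B"
  shows "\<exists>\<phi>. hom_ok (tStt t) G \<phi> \<and> (\<forall>i j l i' j' l'. (i,j,l) \<in> verts (tStt t) \<longrightarrow>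
     (i',j',l') \<in> verts (tStt t) \<longrightarrow> (i,j,l) \<noteq> (i',j',l') \<longrightarrow> (l + c i) mod 2 = (l' + c i') mod 2 \<longrightarrow>
     \<not> adj G (\<phi> (i,j,l)) (\<phi> (i',j',l')))"
proof -
  define VT where "VT = verts (tStt t)"
  have fT: "finite VT" using tStt_graph unfolding is_graph_def VT_def by simp
  obtain eA where eA: "eA ` VT \<subseteq> A" "inj_on eA VT" using card_le_inj[OF fT fA] cA VT_def by blast
  obtain eB where eB: "eB ` VT \<subseteq> B" "inj_on eB VT" using card_le_inj[OF fT fB] cB VT_def by blast
  define sd where "sd = (\<lambda>x::nat\<times>nat\<times>nat. (snd (snd x) + c (fst x)) mod 2)"
  define \<phi> where "\<phi> = (\<lambda>x. if sd x = 0 then eA x else eB x)"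
  have AB: "A \<inter> B = {}" "A \<subseteq> verts G" "B \<subseteq> verts G" using bp unfolding bip_pair_def by auto
  have side: "x \<in> VT \<Longrightarrow> (sd x = 0 \<longrightarrow> \<phi> x \<in> A) \<and> (sd x \<noteq> 0 \<longrightarrow> \<phi> x \<in> B)" for x
    using eA eB unfolding \<phi>_def by auto
  have inj: "inj_on \<phi> VT"
  proof (rule inj_onI)
    fix x y assume xy: "x \<in> VT" "y \<in> VT" "\<phi> x = \<phi> y"
    show "x = y"
    proof (cases "sd x = 0"; cases "sd y = 0")
      assume "sd x = 0" "sd y = 0"
      then show ?thesis using xy eA unfolding \<phi>_def by (simp add: inj_on_def)
    next
      assume "sd x \<noteq> 0" "sd y \<noteq> 0"
      then show ?thesis using xy eB unfolding \<phi>_def by (simp add: inj_on_def)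
    next
      assume "sd x = 0" "sd y \<noteq> 0"
      then show ?thesis using xy side[of x] side[of y] AB by auto
    next
      assume "sd x \<noteq> 0" "sd y = 0"
      then show ?thesis using xy side[of x] side[of y] AB by auto
    qed
  qed
  have sub: "\<phi> ` VT \<subseteq> verts G" using side AB by blast
  have ed: "adj G (\<phi> a) (\<phi> b)" if "tE t a b" for a b
  proof -
    have ab: "a \<in> VT" "b \<in> VT" "sd a \<noteq> sd b"
      using that unfolding tE_def VT_def sd_def by (auto simp: tStt_verts) presburger+
    moreover have "sd a < 2" "sd b < 2" unfolding sd_def by simp_all
    ultimately show ?thesis using side[of a] side[of b] bip_adj[OF bp] by (cases "sd a = 0") auto
  qed
  have hom: "hom_ok (tStt t) G \<phi>" using hom_okI[of \<phi> t G] inj sub ed VT_def by blast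
  show ?thesis
  proof (intro exI conjI allI impI)
    show "hom_ok (tStt t) G \<phi>" by (rule hom)
    fix i j l i' j' l'
    assume a: "(i,j,l) \<in> verts (tStt t)" "(i',j',l') \<in> verts (tStt t)" "(i,j,l) \<noteq> (i',j',l')"
      "(l + c i) mod 2 = (l' + c i') mod 2"
    have "\<phi> (i,j,l) \<noteq> \<phi> (i',j',l')" using inj a unfolding VT_def by (meson inj_onD)
    moreover have "sd (i,j,l) = sd (i',j',l')" using a(4) unfolding sd_def by simp
    ultimately show "\<not> adj G (\<phi> (i, j, l)) (\<phi> (i', j', l'))"
      using side[of "(i,j,l)"] side[of "(i',j',l')"] a(1,2) bip_nadjA[OF bp] bip_nadjB[OF bp]
      unfolding VT_def by metis
  qed
qed



lemma adj_verts: "is_graph G \<Longrightarrow> adj G u v \<Longrightarrow> u \<in> verts G \<and> v \<in> verts G"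
  unfolding adj_def by (meson graph_edge_sub insert_subset)

lemma special_hom:
  fixes G :: "'v graph" and p :: "nat \<Rightarrow> 'v"
  assumes G: "is_graph G" and bp: "bip_pair G A B" and fA: "finite A" and fB: "finite B"
    and cA: "card (verts (tStt t)) \<le> card A" and cB: "card (verts (tStt t)) \<le> card B"
    and w: "w \<notin> A \<union> B" and a1: "a1 \<in> A" and a2: "a2 \<in> A" and a12: "a1 \<noteq> a2"
    and wa1: "adj G w a1" and wa2: "\<not> adj G w a2"
    and p0: "p 0 = w" and k1: "1 \<le> k" and padj: "\<forall>m<k. adj G (p m) (p (Suc m))"
    and pinj: "inj_on p {0..k}" and pout: "\<forall>m<k. p m \<notin> A \<union> B" and pk: "p k \<in> A \<union> B"
    and pka1: "p k \<noteq> a1" and pka2: "p k \<noteq> a2"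
    and s: "(i,j,l) \<in> verts (tStt t)" and o: "(i,j',l') \<in> verts (tStt t)"
    and ll: "l' < l" and odd: "odd (l + l')"
    and nE: "\<not> tE t (i,j,l) (i,j',l')" "\<not> tE t (i,j',l') (i,j,l)"
  shows "\<exists>\<phi>. hom_ok (tStt t) G \<phi> \<and> \<not> adj G (\<phi> (i,j,l)) (\<phi> (i,j',l'))"
proof -
  define VT where "VT = verts (tStt t)"
  have fT: "finite VT" using tStt_graph unfolding is_graph_def VT_def by simp
  have AB: "A \<inter> B = {}" "A \<subseteq> verts G" "B \<subseteq> verts G" using bp unfolding bip_pair_def by auto
  have it: "i < t" using s by (simp add: tStt_verts)
  have l2: "2 \<le> l"
  proof (rule ccontr)
    assume "\<not> 2 \<le> l"
    then have "l = 1" "l' = 0" using ll by auto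
    then have "j' = 0" "j < 3" using o s by (auto simp: tStt_verts)
    then have "tE t (i,j',l') (i,j,l)" unfolding tE_def using it \<open>l = 1\<close> \<open>l' = 0\<close> by auto
    then show False using nE by simp
  qed
  have jl: "j < 3" "l \<le> t" using s l2 by (auto simp: tStt_verts)
  define sv where "sv = (i,j,l)"
  define ov where "ov = (i,j',l')"
  define u1 where "u1 = (i,j,l-1)"
  have u1V: "u1 \<in> VT" unfolding u1_def VT_def using it jl l2 by (auto simp: tStt_verts)
  have tu1: "tE t u1 sv" unfolding tE_def u1_def sv_def using it jl l2
    by (auto intro!: exI[of _ "l - 1"])
  have ou1: "ov \<noteq> u1"
  proof
    assume "ov = u1"
    then have "tE t ov sv" using tu1 by simp
    then show False using nE unfolding ov_def sv_def by simp
  qed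
  have os: "ov \<noteq> sv" "u1 \<noteq> sv" using ll l2 unfolding ov_def sv_def u1_def by auto
  define D where "D = VT - {sv, u1, ov}"
  have cD: "card D = card VT - 3"
  proof -
    have "card {sv,u1,ov} = 3" using os ou1 by auto
    moreover have "{sv,u1,ov} \<subseteq> VT" using s o u1V unfolding sv_def ov_def VT_def by auto
    ultimately show ?thesis unfolding D_def using fT by (simp add: card_Diff_subset)
  qed
  have c1: "card A - 3 \<le> card (A - {a1, a2, p k})"
  proof -
    have "card {a1,a2,p k} \<le> 3" by (simp add: card_insert_if)
    then show ?thesis using diff_card_le_card_Diff[of "{a1,a2,p k}" A] by simp
  qed
  have c2: "card B - 1 \<le> card (B - {p k})"
    using diff_card_le_card_Diff[of "{p k}" B] by simp
  obtain eA where eA: "eA ` D \<subseteq> A - {a1, a2, p k}" "inj_on eA D"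
    using card_le_inj[of D "A - {a1, a2, p k}"] fT fA cD c1 cA unfolding D_def VT_def by fastforce
  obtain eB where eB: "eB ` D \<subseteq> B - {p k}" "inj_on eB D"
    using card_le_inj[of D "B - {p k}"] fT fB cD c2 cB unfolding D_def VT_def by fastforce
  define \<delta> where "\<delta> = (if p k \<in> A then k + 1 else k)"
  define tl where "tl = (\<lambda>x::nat\<times>nat\<times>nat. fst x = i \<and> fst (snd x) = j \<and> l < snd (snd x))"
  define col where "col = (\<lambda>x::nat\<times>nat\<times>nat. if tl x then (snd (snd x) + l + 1 + \<delta>) mod 2
      else if fst x = i then (snd (snd x) + l + 1) mod 2 else snd (snd x) mod 2)"
  define pt where "pt = (\<lambda>x::nat\<times>nat\<times>nat. tl x \<and> snd (snd x) - l \<le> k)"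
  define g where "g = (\<lambda>x. if x = u1 then a1 else if x = ov then a2 else if col x = 0 then eA x else eB x)"
  define \<phi> where "\<phi> = (\<lambda>x. if x = sv then w else if pt x then p (snd (snd x) - l) else g x)"
  define reg where "reg = (\<lambda>x. x \<noteq> sv \<and> \<not> pt x)"
  have col2: "col x < 2" for x unfolding col_def by auto
  have colu1: "col u1 = 0" unfolding col_def tl_def u1_def using l2 by simp
  have colo: "col ov = 0" unfolding col_def tl_def ov_def using ll odd by simp
  have regu1: "reg u1" "reg ov" using os ll unfolding reg_def pt_def tl_def u1_def ov_def by auto
  have \<phi>reg: "\<phi> x = g x" if "reg x" for x using that unfolding reg_def \<phi>_def by auto
  have gside: "(col x = 0 \<longrightarrow> g x \<in> A) \<and> (col x \<noteq> 0 \<longrightarrow> g x \<in> B)" if "x \<in> VT" "reg x" for x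
  proof (cases "x = u1 \<or> x = ov")
    case True
    then show ?thesis using colu1 colo a1 a2 unfolding g_def by auto
  next
    case False
    then have "x \<in> D" using that unfolding D_def reg_def by auto
    then show ?thesis using False eA eB unfolding g_def by auto
  qed
  have gnot: "g x \<noteq> p k" if "x \<in> VT" "reg x" for x
  proof (cases "x = u1 \<or> x = ov")
    case True
    then show ?thesis using pka1 pka2 unfolding g_def by auto
  next
    case False
    then have "x \<in> D" using that unfolding D_def reg_def by auto
    then show ?thesis using False eA eB unfolding g_def by auto
  qed
  have ginj: "x = y" if "x \<in> VT" "y \<in> VT" "reg x" "reg y" "g x = g y" for x y
  proof -
    have gA: "g z \<in> A - {a1,a2}" if "z \<in> D" "col z = 0" for z
      using that eA unfolding g_def D_def by auto
    have gB: "g z \<in> B" if "z \<in> D" "col z \<noteq> 0" for z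
      using that eB unfolding g_def D_def by auto
    have Dx: "x \<in> D" if "x \<in> VT" "reg x" "x \<noteq> u1" "x \<noteq> ov" for x
      using that unfolding D_def reg_def by auto
    show ?thesis
    proof (cases "x = u1 \<or> x = ov \<or> y = u1 \<or> y = ov")
      case True
      then show ?thesis using that gA gB Dx a12 a1 a2 AB ou1 unfolding g_def
        by (smt (verit, ccfv_threshold) Diff_iff disjoint_iff insertCI)
    next
      case False
      then have xy: "x \<in> D" "y \<in> D" using Dx that by auto
      show ?thesis
      proof (cases "col x = 0"; cases "col y = 0")
        assume "col x = 0" "col y = 0"
        then show ?thesis using xy that(5) False eA unfolding g_def by (auto simp: inj_on_def)
      next
        assume "col x \<noteq> 0" "col y \<noteq> 0"
        then show ?thesis using xy that(5) False eB unfolding g_def by (auto simp: inj_on_def)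
      next
        assume c: "col x = 0" "col y \<noteq> 0"
        have "g x \<in> A" "g y \<in> B" using gA[OF xy(1) c(1)] gB[OF xy(2) c(2)] by auto
        then show ?thesis using that(5) AB(1) by auto
      next
        assume c: "col x \<noteq> 0" "col y = 0"
        have "g x \<in> B" "g y \<in> A" using gA[OF xy(2) c(2)] gB[OF xy(1) c(1)] by auto
        then show ?thesis using that(5) AB(1) by auto
      qed
    qed
  qed
  have ptv: "\<phi> x = p (snd (snd x) - l) \<and> 1 \<le> snd (snd x) - l \<and> snd (snd x) - l \<le> k" if "pt x" "x \<noteq> sv" for x
    using that unfolding \<phi>_def pt_def tl_def by auto
  have pw: "p d \<noteq> w" if "1 \<le> d" "d \<le> k" for d
    using pinj that p0 unfolding inj_on_def by (metis atLeastAtMost_iff le0 not_one_le_zero)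
  have pAB: "p d \<notin> A \<union> B" if "d < k" for d using pout that by simp
  have inj: "inj_on \<phi> VT"
  proof (rule inj_onI)
    fix x y assume xy: "x \<in> VT" "y \<in> VT" "\<phi> x = \<phi> y"
    have regv: "\<phi> z \<in> A \<union> B \<and> \<phi> z \<noteq> p k" if "z \<in> VT" "reg z" for z
      using gside[OF that] gnot[OF that] \<phi>reg[OF that(2)] by (cases "col z = 0") auto
    have \<phi>s: "\<phi> sv = w" unfolding \<phi>_def by simp
    have ptd: "x = y" if "pt x" "pt y" "x \<noteq> sv" "y \<noteq> sv" "\<phi> x = \<phi> y" for x y
    proof -
      have "snd (snd x) - l = snd (snd y) - l"
        using ptv[OF that(1,3)] ptv[OF that(2,4)] that(5) pinj unfolding inj_on_def
        by (metis atLeastAtMost_iff le0)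
      moreover have "l < snd (snd x)" "l < snd (snd y)" "fst x = fst y" "fst (snd x) = fst (snd y)"
        using that unfolding pt_def tl_def by auto
      ultimately have "snd (snd x) = snd (snd y)" "fst x = fst y" "fst (snd x) = fst (snd y)" by auto
      then show "x = y" by (simp add: prod_eq_iff)
    qed
    have ptr: False if hx: "pt x" "x \<noteq> sv" "reg y" "y \<in> VT" "\<phi> x = \<phi> y" for x y
    proof -
      obtain d where d: "\<phi> x = p d" "1 \<le> d" "d \<le> k" using ptv[OF hx(1,2)] by blast
      show False
      proof (cases "d = k")
        case True then show ?thesis using d regv[OF hx(4,3)] hx(5) by simp
      next
        case False then show ?thesis using d regv[OF hx(4,3)] hx(5) pAB[of d] by simp
      qed
    qed
    have sother: False if "y \<noteq> sv" "y \<in> VT" "\<phi> y = w" for y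
    proof (cases "pt y")
      case True
      then show False using ptv[OF True that(1)] pw that(3) by metis
    next
      case False
      then have "reg y" using that unfolding reg_def by simp
      then show False using regv[OF that(2)] that(3) w by auto
    qed
    show "x = y"
    proof (cases "x = sv")
      case True
      then show ?thesis using sother[of y] xy \<phi>s by auto
    next
      case xs: False
      show ?thesis
      proof (cases "y = sv")
        case True
        then show ?thesis using sother[of x] xy \<phi>s xs by auto
      next
        case ys: False
        show ?thesis
        proof (cases "pt x"; cases "pt y")
          assume "pt x" "pt y" then show ?thesis using ptd xs ys xy by blast
        next
          assume "pt x" "\<not> pt y" then show ?thesis using ptr[of x y] xs ys xy unfolding reg_def by blast
        next
          assume "\<not> pt x" "pt y" then show ?thesis using ptr[of y x] xs ys xy unfolding reg_def by metis
        next
          assume "\<not> pt x" "\<not> pt y"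
          then have "reg x" "reg y" using xs ys unfolding reg_def by auto
          then show ?thesis using ginj[of x y] xy \<phi>reg by metis
        qed
      qed
    qed
  qed
  have pV: "p d \<in> verts G" if "d \<le> k" for d
  proof (cases "d < k")
    case True then show ?thesis using padj adj_verts[OF G] by blast
  next
    case False
    then have "d = Suc (k - 1)" using that k1 by simp
    moreover have "k - 1 < k" using k1 by simp
    ultimately show ?thesis using padj adj_verts[OF G] by metis
  qed
  have wV: "w \<in> verts G" using adj_verts[OF G wa1] by simp
  have sub: "\<phi> ` VT \<subseteq> verts G"
  proof
    fix z assume "z \<in> \<phi> ` VT"
    then obtain x where x: "x \<in> VT" "z = \<phi> x" by blast
    show "z \<in> verts G"
    proof (cases "x = sv")
      case True then show ?thesis using x wV unfolding \<phi>_def by simp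
    next
      case False
      show ?thesis
      proof (cases "pt x")
        case True then show ?thesis using ptv[OF True False] pV x by metis
      next
        case F2: False
        then have "reg x" using False unfolding reg_def by simp
        then show ?thesis using gside[OF x(1)] \<phi>reg x AB by (cases "col x = 0") auto
      qed
    qed
  qed

  have regadj: "adj G (\<phi> x) (\<phi> y)" if "x \<in> VT" "y \<in> VT" "reg x" "reg y" "col x \<noteq> col y" for x y
  proof (cases "col x = 0")
    case True
    then have "col y = 1" using that(5) col2[of y] by simp
    then have "\<phi> x \<in> A" "\<phi> y \<in> B" using gside[OF that(1,3)] gside[OF that(2,4)] True \<phi>reg that by auto
    then show ?thesis using bip_adj[OF bp] by blast
  next
    case False
    then have "col y = 0" using that(5) col2[of y] col2[of x] by simp
    then have "\<phi> x \<in> B" "\<phi> y \<in> A" using gside[OF that(1,3)] gside[OF that(2,4)] False \<phi>reg that by auto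
    then show ?thesis using bip_adj[OF bp] by blast
  qed
  have colc: "col (i0,j0,m) \<noteq> col (i0,j0,Suc m)" if "\<not> (i0 = i \<and> j0 = j \<and> m = l)" for i0 j0 m
  proof -
    have h1: "(x::nat) mod 2 \<noteq> Suc x mod 2" for x by presburger
    have h2: "(x::nat) mod 2 \<noteq> (Suc x + 1 + d) mod 2" if "(x + 1 + d) mod 2 = (x::nat) mod 2" for x d using that by presburger
    show ?thesis using that h1 unfolding col_def tl_def by (auto; presburger)
  qed
  have ed: "adj G (\<phi> a) (\<phi> b)" if tab: "tE t a b" for a b
  proof -
    have abV: "a \<in> VT" "b \<in> VT" using tE_verts[OF tab] unfolding VT_def by auto
    from tab consider (c) i0 j0 where "i0 < t" "j0 < 3" "a = (i0,0,0)" "b = (i0,j0,1)"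
      | (br) i0 j0 m where "i0 < t" "j0 < 3" "1 \<le> m" "m < t" "a = (i0,j0,m)" "b = (i0,j0,Suc m)"
      unfolding tE_def by blast
    then show ?thesis
    proof cases
      case c
      have "reg a" "reg b" using c l2 unfolding reg_def pt_def tl_def sv_def by auto
      moreover have "col (i0,j0,Suc 0) = col (i0,0,Suc 0)" unfolding col_def tl_def using l2 by simp
      then have "col a \<noteq> col b" using colc[of i0 0 0] c l2 by simp
      ultimately show ?thesis using regadj abV by blast
    next
      case br
      show ?thesis
      proof (cases "a = sv")
        case True
        then have b: "b = (i,j,Suc l)" using br unfolding sv_def by simp
        then have "\<phi> b = p 1" "\<phi> a = p 0" using True p0 k1 unfolding \<phi>_def pt_def tl_def sv_def by auto
        then show ?thesis using padj k1 by (metis One_nat_def less_le_trans zero_less_one)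
      next
        case as: False
        show ?thesis
        proof (cases "b = sv")
          case True
          then have "a = u1" using br unfolding sv_def u1_def by auto
          then have "\<phi> a = g u1" using regu1 \<phi>reg by simp
          then have "\<phi> a = a1" unfolding g_def by simp
          moreover have "\<phi> b = w" using True unfolding \<phi>_def by simp
          ultimately show ?thesis using wa1 adj_sym by metis
        next
          case bs: False
          show ?thesis
          proof (cases "pt b")
            case True
            then have "i0 = i" "j0 = j" "l < Suc m" "Suc m - l \<le> k" using br unfolding pt_def tl_def by auto
            moreover have "m \<noteq> l" using as br \<open>i0 = i\<close> \<open>j0 = j\<close> unfolding sv_def by auto
            ultimately have "pt a" "l < m" using br unfolding pt_def tl_def by auto
            then have "\<phi> a = p (m - l)" "\<phi> b = p (Suc (m - l))" "m - l < k"
              using ptv[OF _ as] ptv[OF True bs] br \<open>Suc m - l \<le> k\<close> by (auto simp: Suc_diff_le)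
            then show ?thesis using padj by simp
          next
            case pb: False
            show ?thesis
            proof (cases "pt a")
              case True
              then have "i0 = i" "j0 = j" "l < m" "m - l \<le> k" using br unfolding pt_def tl_def by auto
              then have "m - l = k" using pb br unfolding pt_def tl_def by auto
              then have pa: "\<phi> a = p k" using ptv[OF True as] br by simp
              have rb: "reg b" using pb bs unfolding reg_def by simp
              have tb: "tl b" using br \<open>i0 = i\<close> \<open>j0 = j\<close> \<open>l < m\<close> unfolding tl_def by simp
              have mk: "m = l + k" using \<open>m - l = k\<close> \<open>l < m\<close> by simp
              show ?thesis
              proof (cases "p k \<in> A")
                case True
                have "col b = (Suc m + l + 1 + (k + 1)) mod 2" using tb True br unfolding col_def \<delta>_def by simp
                then have "col b \<noteq> 0" using mk by presburger
                then have "\<phi> b \<in> B" using gside[OF abV(2) rb] \<phi>reg[OF rb] by simp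
                then show ?thesis using pa True bip_adj[OF bp] by simp
              next
                case False
                then have pkB: "p k \<in> B" using pk by simp
                have "col b = (Suc m + l + 1 + k) mod 2" using tb False br unfolding col_def \<delta>_def by simp
                then have "col b = 0" using mk by presburger
                then have "\<phi> b \<in> A" using gside[OF abV(2) rb] \<phi>reg[OF rb] by simp
                then show ?thesis using pa pkB bip_adj[OF bp] by simp
              qed
            next
              case pa: False
              have "reg a" "reg b" using pa pb as bs unfolding reg_def by auto
              moreover have "\<not> (i0 = i \<and> j0 = j \<and> m = l)" using as br unfolding sv_def by auto
              then have "col a \<noteq> col b" using colc br by simp
              ultimately show ?thesis using regadj abV by blast
            qed
          qed
        qed
      qed
    qed
  qed
  have hom: "hom_ok (tStt t) G \<phi>" using hom_okI[of \<phi> t G] inj sub ed VT_def by blast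
  have "\<phi> sv = w" unfolding \<phi>_def by simp
  moreover have "\<phi> ov = a2" using \<phi>reg[OF regu1(2)] ou1 unfolding g_def by simp
  ultimately show ?thesis using hom wa2 unfolding sv_def ov_def by metis
qed



lemma reach_sym: "reach G x y \<Longrightarrow> reach G y x"
  unfolding reach_def
proof (induction rule: rtranclp_induct)
  case base then show ?case by simp
next
  case (step y z)
  then have "(\<lambda>u v. u \<in> verts G \<and> v \<in> verts G \<and> adj G u v) z y" using adj_sym by metis
  then show ?case using step(3) by (rule converse_rtranclp_into_rtranclp)
qed

lemma reach_trans: "reach G x y \<Longrightarrow> reach G y z \<Longrightarrow> reach G x z"
  unfolding reach_def by simp

lemma reach_adj: "x \<in> verts G \<Longrightarrow> y \<in> verts G \<Longrightarrow> adj G x y \<Longrightarrow> reach G x y"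
  unfolding reach_def by auto

lemma reach_refl: "reach G x x"
  unfolding reach_def by simp

lemma reach_del: "reach (delete_vertex G a) x y \<Longrightarrow> reach G x y"
  unfolding reach_def
proof (induction rule: rtranclp_induct)
  case base then show ?case by simp
next
  case (step y z)
  then have hh: "(\<lambda>u v. u \<in> verts G \<and> v \<in> verts G \<and> adj G u v) y z"
    unfolding delete_vertex_def adj_def by auto
  show ?case by (rule rtranclp.rtrancl_into_rtrancl[OF step(3) hh])
qed

lemma del_connected:
  assumes G: "is_graph G" and nc: "\<not> cut_vertex G a" and a: "a \<in> verts G"
    and w: "w \<in> verts G" "w \<noteq> a" "adj G w a" and b: "b \<in> verts G" "b \<noteq> a" "adj G a b"
  shows "reach (delete_vertex G a) w b"
proof (rule ccontr)
  assume nr: "\<not> reach (delete_vertex G a) w b"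
  define D where "D = delete_vertex G a"
  define VG where "VG = verts G"
  define VD where "VD = verts D"
  have VD: "VD = VG - {a}" unfolding VD_def VG_def D_def delete_vertex_def by simp
  define cG where "cG = (\<lambda>x. {u \<in> VG. reach G x u})"
  define cD where "cD = (\<lambda>x. {u \<in> VD. reach D x u})"
  have fG: "finite VG" using G unfolding is_graph_def VG_def by simp
  have fD: "finite VD" using fG VD by simp
  have cGeq: "cG x = cG y" if "reach G x y" for x y
    unfolding cG_def using that reach_sym reach_trans by metis
  define h where "h = (\<lambda>S. cG (SOME x. x \<in> VD \<and> cD x = S))"
  have hD: "h (cD x) = cG x" if "x \<in> VD" for x
  proof -
    have ex: "\<exists>y. y \<in> VD \<and> cD y = cD x" using that by blast
    define y where "y = (SOME y. y \<in> VD \<and> cD y = cD x)"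
    have y: "y \<in> VD" "cD y = cD x" using someI_ex[OF ex] unfolding y_def by auto
    then have "y \<in> cD x" unfolding cD_def using reach_refl[of D y] by auto
    then have "reach D x y" unfolding cD_def by simp
    then have "reach G x y" using reach_del unfolding D_def by metis
    then show ?thesis using cGeq y unfolding h_def y_def by metis
  qed
  have wD: "w \<in> VD" "b \<in> VD" using w b VD VG_def by auto
  have cGa: "cG a = cG w" using cGeq reach_adj[OF w(1) a w(3)] by metis
  have compG: "cG ` VG = h ` (cD ` VD)"
  proof
    show "cG ` VG \<subseteq> h ` cD ` VD"
    proof
      fix S assume "S \<in> cG ` VG"
      then obtain x where x: "x \<in> VG" "S = cG x" by blast
      show "S \<in> h ` cD ` VD"
      proof (cases "x = a")
        case True then show ?thesis using x cGa hD[OF wD(1)] wD by blast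
      next
        case False then have "x \<in> VD" using x VD by simp
        then show ?thesis using x hD by blast
      qed
    qed
  next
    show "h ` cD ` VD \<subseteq> cG ` VG" using hD VD by auto
  qed
  have ninj: "\<not> inj_on h (cD ` VD)"
  proof
    assume inj: "inj_on h (cD ` VD)"
    have "reach G w b" using reach_trans reach_adj[OF w(1) a w(3)] reach_adj[OF a b(1) b(3)] by metis
    then have "h (cD w) = h (cD b)" using hD wD cGeq by metis
    then have "cD w = cD b" using inj wD by (meson image_eqI inj_onD)
    moreover have "b \<in> cD b" unfolding cD_def using wD reach_refl[of D b] by auto
    ultimately have "reach D w b" unfolding cD_def by auto
    then show False using nr D_def by simp
  qed
  have fc: "finite (cD ` VD)" using fD by simp
  have "card (h ` cD ` VD) < card (cD ` VD)"
    using ninj card_image_le[OF fc, of h] inj_on_iff_eq_card[OF fc, of h] by linarith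
  then have "num_components G < num_components D"
    unfolding num_components_def using compG unfolding cG_def cD_def VG_def VD_def by simp
  then show False using nc a unfolding cut_vertex_def D_def by simp
qed

lemma walk_path:
  fixes R :: "'a \<Rightarrow> 'a \<Rightarrow> bool"
  assumes r: "R\<^sup>*\<^sup>* w b" and b: "b \<in> S" and w: "w \<notin> S"
  shows "\<exists>f n. f 0 = w \<and> 1 \<le> n \<and> (\<forall>i<n. R (f i) (f (Suc i))) \<and> inj_on f {0..n} \<and>
     (\<forall>m<n. f m \<notin> S) \<and> f n \<in> S"
proof -
  define Q where "Q = (\<lambda>n. \<exists>f. f 0 = w \<and> f n \<in> S \<and> (\<forall>i<n. R (f i) (f (Suc i))))"
  obtain n where "(R ^^ n) w b" using r rtranclp_power by metis
  then have "Q n" unfolding Q_def using b relpowp_fun_conv by metis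
  define n0 where "n0 = (LEAST n. Q n)"
  have Qn0: "Q n0" unfolding n0_def using \<open>Q n\<close> by (rule LeastI)
  have minQ: "\<not> Q m" if "m < n0" for m using that unfolding n0_def using not_less_Least by blast
  obtain f where f: "f 0 = w" "f n0 \<in> S" "\<forall>i<n0. R (f i) (f (Suc i))" using Qn0 unfolding Q_def by blast
  have n1: "1 \<le> n0" using f w by (cases n0) auto
  have out: "\<forall>m<n0. f m \<notin> S"
  proof (intro allI impI)
    fix m assume m: "m < n0"
    show "f m \<notin> S"
    proof
      assume "f m \<in> S"
      then have "Q m" unfolding Q_def using f m by auto
      then show False using minQ m by simp
    qed
  qed
  have inj: "inj_on f {0..n0}"
  proof (rule ccontr)
    assume "\<not> inj_on f {0..n0}"
    then obtain i j where ij: "i < j" "j \<le> n0" "f i = f j"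
      unfolding inj_on_def by (metis atLeastAtMost_iff linorder_neqE_nat)
    define g where "g = (\<lambda>m. if m \<le> i then f m else f (m + (j - i)))"
    define n' where "n' = n0 - (j - i)"
    have "Q n'"
      unfolding Q_def
    proof (intro exI conjI allI impI)
      show "g 0 = w" unfolding g_def using f by simp
      show "g n' \<in> S"
      proof (cases "n' \<le> i")
        case True
        then have "n' = i" "j = n0" using ij unfolding n'_def by auto
        then show ?thesis unfolding g_def using ij f by simp
      next
        case False
        then show ?thesis unfolding g_def n'_def using ij f by simp
      qed
      fix m assume m: "m < n'"
      show "R (g m) (g (Suc m))"
      proof (cases "m < i")
        case True then show ?thesis unfolding g_def using f ij m n'_def by auto
      next
        case False
        show ?thesis
        proof (cases "m = i")
          case True
          then have "g m = f j" "g (Suc m) = f (Suc j)" unfolding g_def using ij by auto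
          moreover have "j < n0" using m True ij unfolding n'_def by auto
          ultimately show ?thesis using f by simp
        next
          case F2: False
          then have "g m = f (m + (j - i))" "g (Suc m) = f (Suc (m + (j - i)))" unfolding g_def using False by auto
          moreover have "m + (j - i) < n0" using m ij unfolding n'_def by auto
          ultimately show ?thesis using f by simp
        qed
      qed
    qed
    moreover have "n' < n0" unfolding n'_def using ij by auto
    ultimately show False using minQ by simp
  qed
  show ?thesis using f n1 out inj by blast
qed



lemma no_loop: "is_graph G \<Longrightarrow> \<not> adj G w w"
  unfolding adj_def using graph_edgeE by (metis doubleton_eq_iff insert_absorb2)

lemma key:
  fixes G :: "'v graph"
  assumes G: "is_graph G" and nocut: "\<forall>v\<in>verts G. \<not> cut_vertex G v" and bp: "bip_pair G A B"
    and cA: "card A \<ge> 3 * t^2 + t + 1" and cB: "card B \<ge> 3 * t^2 + t + 1"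
    and w: "w \<in> verts G" "w \<notin> A \<union> B" and a1: "a1 \<in> A" "adj G w a1" and a0: "a0 \<in> A" "\<not> adj G w a0"
  shows "inter_to G (tStt t)"
proof -
  have AB: "A \<inter> B = {}" "A \<subseteq> verts G" "B \<subseteq> verts G" using bp unfolding bip_pair_def by auto
  have fG: "finite (verts G)" using G unfolding is_graph_def by simp
  have fA: "finite A" "finite B" using finite_subset[OF AB(2) fG] finite_subset[OF AB(3) fG] by auto
  have cTA: "card (verts (tStt t)) \<le> card A" "card (verts (tStt t)) \<le> card B"
    using tStt_card[of t] cA cB by auto
  have pathex: "\<exists>p k a2. a2 \<in> A \<and> a2 \<noteq> a1 \<and> \<not> adj G w a2 \<and> p 0 = w \<and> 1 \<le> k \<and>
      (\<forall>m<k. adj G (p m) (p (Suc m))) \<and> inj_on p {0..k} \<and> (\<forall>m<k. p m \<notin> A \<union> B) \<and>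
      p k \<in> A \<union> B \<and> p k \<noteq> a1 \<and> p k \<noteq> a2" if t1: "1 \<le> t"
  proof (cases "\<exists>n\<in>(A \<union> B) - {a1}. adj G w n")
    case True
    then obtain n where n: "n \<in> A \<union> B" "n \<noteq> a1" "adj G w n" by blast
    define p where "p = (\<lambda>m::nat. if m = 0 then w else n)"
    have "a0 \<noteq> a1" using a0 a1 by auto
    moreover have "inj_on p {0..1}" unfolding p_def inj_on_def using n w by auto
    moreover have "n \<noteq> a0" using n a0 by auto
    ultimately show ?thesis using n a0 w
      by (intro exI[of _ p] exI[of _ 1] exI[of _ a0]) (auto simp: p_def)
  next
    case False
    obtain b where b: "b \<in> B"
      using cB by (metis all_not_in_conv card.empty not_less_eq_eq zero_less_Suc le_zero_eq add_is_0 one_neq_zero)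
    have "reach (delete_vertex G a1) w b"
      using del_connected[OF G _ _ w(1) _ a1(2) _ _ bip_adj[OF bp a1(1) b, THEN conjunct1]] nocut a1 b AB w
      by auto
    define R where "R = (\<lambda>u v. u \<in> verts (delete_vertex G a1) \<and> v \<in> verts (delete_vertex G a1) \<and>
        adj (delete_vertex G a1) u v)"
    have "R\<^sup>*\<^sup>* w b" using \<open>reach (delete_vertex G a1) w b\<close> unfolding reach_def R_def .
    then obtain f n where f: "f 0 = w" "1 \<le> n" "\<forall>i<n. R (f i) (f (Suc i))" "inj_on f {0..n}"
      "\<forall>m<n. f m \<notin> A \<union> B" "f n \<in> A \<union> B"
      using walk_path[of R w b "A \<union> B"] b w by blast
    have fadj: "\<forall>m<n. adj G (f m) (f (Suc m))"
      using f(3) unfolding R_def delete_vertex_def adj_def by auto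
    have "n - 1 < n" using f(2) by simp
    then have "R (f (n - 1)) (f (Suc (n - 1)))" using f(3) by blast
    moreover have "Suc (n - 1) = n" using f(2) by simp
    ultimately have "R (f (n - 1)) (f n)" by simp
    then have "f n \<noteq> a1" using f(2) unfolding R_def delete_vertex_def by simp
    have "card {a1, f n} \<le> 2" by (simp add: card_insert_if)
    moreover have "card A \<ge> 5"
    proof -
      have "t^2 \<ge> 1" using t1 by simp
      then show ?thesis using cA t1 by linarith
    qed
    ultimately have "card (A - {a1, f n}) \<ge> 3" using diff_card_le_card_Diff[of "{a1, f n}" A] by simp
    then have "A - {a1, f n} \<noteq> {}" by (metis card.empty not_numeral_le_zero)
    then obtain a2 where a2: "a2 \<in> A" "a2 \<noteq> a1" "a2 \<noteq> f n" by blast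
    have "\<not> adj G w a2" using False a2 by auto
    then show ?thesis using a2 f fadj \<open>f n \<noteq> a1\<close> by blast
  qed
  show ?thesis
  proof (rule inter_to_I[OF G tStt_graph])
    show "\<exists>\<phi>. hom_ok (tStt t) G \<phi>" using std_hom[OF bp fA cTA, of "\<lambda>_. 0"] by blast
    show "\<forall>x\<in>verts (tStt t). \<forall>y\<in>verts (tStt t). x \<noteq> y \<longrightarrow> {x, y} \<notin> edges (tStt t) \<longrightarrow>
       (\<exists>\<phi>. hom_ok (tStt t) G \<phi> \<and> \<not> adj G (\<phi> x) (\<phi> y))"
    proof (intro ballI impI)
      fix x y assume xV: "x \<in> verts (tStt t)" and yV: "y \<in> verts (tStt t)" and xy: "x \<noteq> y"
        and nE: "{x, y} \<notin> edges (tStt t)"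
      obtain i1 j1 l1 where x: "x = (i1,j1,l1)" by (cases x) auto
      obtain i2 j2 l2 where y: "y = (i2,j2,l2)" by (cases y) auto
      show "\<exists>\<phi>. hom_ok (tStt t) G \<phi> \<and> \<not> adj G (\<phi> x) (\<phi> y)"
      proof (cases "i1 \<noteq> i2 \<or> even (l1 + l2)")
        case True
        define c where "c = (\<lambda>i'::nat. if i' = i2 then (l1 + l2) mod 2 else 0)"
        have "(l1 + c i1) mod 2 = (l2 + c i2) mod 2" using True unfolding c_def by auto presburger+
        then show ?thesis using std_hom[OF bp fA cTA, of c] xV yV xy x y by blast
      next
        case False
        then have i: "i2 = i1" and od: "odd (l1 + l2)" by auto
        have t1: "1 \<le> t" using xV x by (auto simp: tStt_verts)
        obtain p k a2 where P: "a2 \<in> A" "a2 \<noteq> a1" "\<not> adj G w a2" "p 0 = w" "1 \<le> k"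
          "\<forall>m<k. adj G (p m) (p (Suc m))" "inj_on p {0..k}" "\<forall>m<k. p m \<notin> A \<union> B"
          "p k \<in> A \<union> B" "p k \<noteq> a1" "p k \<noteq> a2" using pathex[OF t1] by blast
        have nE2: "\<not> tE t x y" "\<not> tE t y x" using nE tStt_edge by blast+
        show ?thesis
        proof (cases "l2 < l1")
          case True
          show ?thesis
            using special_hom[OF G bp fA cTA w(2) a1(1) P(1) P(2)[symmetric] a1(2) P(3) P(4-11),
              of i1 j1 l1 j2 l2] xV yV True od nE2 x y i by (auto simp: add.commute)
        next
          case False
          then have "l1 < l2" using od by (cases "l1 = l2") auto
          then obtain \<phi> where "hom_ok (tStt t) G \<phi>" "\<not> adj G (\<phi> y) (\<phi> x)"
            using special_hom[OF G bp fA cTA w(2) a1(1) P(1) P(2)[symmetric] a1(2) P(3) P(4-11),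
              of i1 j2 l2 j1 l1] xV yV od nE2 x y i by (auto simp: add.commute)
          then show ?thesis using adj_sym by metis
        qed
      qed
    qed
  qed
qed



theorem mainTheorem3:
  fixes t :: nat and G :: "'v graph" and A B :: "'v set"
  assumes "X_class t G"
    and "\<forall>v \<in> verts G. \<not> cut_vertex G v"
    and "maximal_bip_pair G A B"
    and "card A \<ge> 3 * t^2 + t + 1" and "card B \<ge> 3 * t^2 + t + 1"
  shows "is_module G (A \<union> B)"
proof (rule ccontr)
  assume nm: "\<not> is_module G (A \<union> B)"
  have G: "is_graph G" and ni: "\<not> inter_to G (tStt t)"
    using assms(1) unfolding X_class_def sifree1_def by auto
  have bp: "bip_pair G A B" using assms(3) unfolding maximal_bip_pair_def by simp
  have AB: "A \<inter> B = {}" "A \<subseteq> verts G" "B \<subseteq> verts G" using bp unfolding bip_pair_def by auto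
  obtain w where w: "w \<in> verts G" "w \<notin> A \<union> B" and nc: "\<not> complete_to G {w} (A \<union> B)"
    and na: "\<not> anticomplete_to G {w} (A \<union> B)"
    using nm AB unfolding is_module_def by blast
  show False
  proof (cases "(\<exists>a1\<in>A. adj G w a1) \<and> (\<exists>a0\<in>A. \<not> adj G w a0)")
    case True
    then obtain a1 a0 where "a1 \<in> A" "adj G w a1" "a0 \<in> A" "\<not> adj G w a0" by blast
    then have "inter_to G (tStt t)" using key[OF G assms(2) bp assms(4,5) w] by blast
    then show False using ni by simp
  next
    case mA: False
    show False
    proof (cases "(\<exists>a1\<in>B. adj G w a1) \<and> (\<exists>a0\<in>B. \<not> adj G w a0)")
      case True
      then obtain a1 a0 where "a1 \<in> B" "adj G w a1" "a0 \<in> B" "\<not> adj G w a0" by blast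
      moreover have "w \<notin> B \<union> A" using w by auto
      ultimately have "inter_to G (tStt t)" using key[OF G assms(2) bip_sym[OF bp] assms(5,4) w(1)] by blast
      then show False using ni by simp
    next
      case mB: False
      have ww: "\<not> adj G w w" using no_loop[OF G] .
      consider (cc) "\<forall>a\<in>A. adj G w a" "\<forall>b\<in>B. adj G w b" | (nn) "\<forall>a\<in>A. \<not> adj G w a" "\<forall>b\<in>B. \<not> adj G w b"
        | (cn) "\<forall>a\<in>A. adj G w a" "\<forall>b\<in>B. \<not> adj G w b" | (nc) "\<forall>a\<in>A. \<not> adj G w a" "\<forall>b\<in>B. adj G w b"
      proof -
        have hA: "(\<forall>a\<in>A. adj G w a) \<or> (\<forall>a\<in>A. \<not> adj G w a)" using mA by blast
        have hB: "(\<forall>a\<in>B. adj G w a) \<or> (\<forall>a\<in>B. \<not> adj G w a)" using mB by blast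
        show "(\<lbrakk>\<forall>a\<in>A. adj G w a; \<forall>b\<in>B. adj G w b\<rbrakk> \<Longrightarrow> thesis) \<Longrightarrow>
          (\<lbrakk>\<forall>a\<in>A. \<not> adj G w a; \<forall>b\<in>B. \<not> adj G w b\<rbrakk> \<Longrightarrow> thesis) \<Longrightarrow>
          (\<lbrakk>\<forall>a\<in>A. adj G w a; \<forall>b\<in>B. \<not> adj G w b\<rbrakk> \<Longrightarrow> thesis) \<Longrightarrow>
          (\<lbrakk>\<forall>a\<in>A. \<not> adj G w a; \<forall>b\<in>B. adj G w b\<rbrakk> \<Longrightarrow> thesis) \<Longrightarrow> thesis"
          using hA hB by blast
      qed
      then show False
      proof cases
        case cc
        then show False using nc unfolding complete_to_def by auto
      next
        case nn
        then show False using na unfolding anticomplete_to_def by auto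
      next
        case cn
        have s1: "\<forall>b\<in>B. \<not> adj G b w" using cn adj_sym by metis
        have s2: "\<forall>a\<in>A. adj G a w" using cn adj_sym by metis
        have "bip_pair G A (B \<union> {w})" unfolding bip_pair_def
        proof (intro conjI)
          show "A \<subseteq> verts G" using AB by simp
          show "B \<union> {w} \<subseteq> verts G" using AB w by simp
          show "A \<inter> (B \<union> {w}) = {}" using AB w by auto
          show "independent G A" using bp unfolding bip_pair_def by simp
          show "independent G (B \<union> {w})" unfolding independent_def
          proof (intro ballI)
            fix u v assume "u \<in> B \<union> {w}" "v \<in> B \<union> {w}"
            then show "\<not> adj G u v" using bip_nadjB[OF bp] cn(2) s1 ww by auto
          qed
          show "complete_to G A (B \<union> {w})" unfolding complete_to_def using bip_adj[OF bp] s2 by auto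
        qed
        moreover have "A \<union> B \<subset> A \<union> (B \<union> {w})" using w by auto
        ultimately show False using assms(3) unfolding maximal_bip_pair_def by blast
      next
        case nc
        have s1: "\<forall>b\<in>A. \<not> adj G b w" using nc adj_sym by metis
        have "bip_pair G (A \<union> {w}) B" unfolding bip_pair_def
        proof (intro conjI)
          show "B \<subseteq> verts G" using AB by simp
          show "A \<union> {w} \<subseteq> verts G" using AB w by simp
          show "(A \<union> {w}) \<inter> B = {}" using AB w by auto
          show "independent G B" using bp unfolding bip_pair_def by simp
          show "independent G (A \<union> {w})" unfolding independent_def
          proof (intro ballI)
            fix u v assume "u \<in> A \<union> {w}" "v \<in> A \<union> {w}"
            then show "\<not> adj G u v" using bip_nadjA[OF bp] nc(1) s1 ww by auto
          qed
          show "complete_to G (A \<union> {w}) B" unfolding complete_to_def using bip_adj[OF bp] nc(2) by auto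
        qed
        moreover have "A \<union> B \<subset> (A \<union> {w}) \<union> B" using w by auto
        ultimately show False using assms(3) unfolding maximal_bip_pair_def by blast
      qed
    qed
  qed
qed

end
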